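(* Let $f$ be a Herglotz function (analytic $\mathbb C_+\to\mathbb C_+$) which has a meromorphic continuation to $\mathbb C_+\cup(a,b)\cup\mathbb C_-$ satisfying $\overline{f(z)}=f(\bar z)$ and having finitely many poles in $(a,b)$. Then the limits $\lim_{\epsilon\downarrow0}f(b-\epsilon)$ and $\lim_{\epsilon\downarrow0}f(b+i\epsilon)$ exist in $\mathbb R\cup\{\infty\}$ and are equal. *)

theory Defs
  imports "HOL-Complex_Analysis.Complex_Analysis"
begin

definition herglotz :: "(complex \<Rightarrow> complex) \<Rightarrow> bool" where
  "herglotz f \<longleftrightarrow> f holomorphic_on {z. Im z > 0} \<and> (\<forall>z. Im z > 0 \<longrightarrow> Im (f z) > 0)"

end

theory Submission imports Defs "HOL-Complex_Analysis.Riemann_Mapping"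
begin

lemma pick:
  assumes hol: "\<psi> holomorphic_on ball 0 1" and bd: "\<And>z. norm z < 1 \<Longrightarrow> norm (\<psi> z) < 1"
    and z1: "norm z1 < 1" and z2: "norm z2 < 1"
  shows "norm (Moebius_function 0 (\<psi> z1) (\<psi> z2)) \<le> norm (Moebius_function 0 z1 z2)"
proof -
  define chi where "chi = Moebius_function 0 (\<psi> z1) \<circ> \<psi> \<circ> Moebius_function 0 (-z1)"
  have m1: "Moebius_function 0 (-z1) holomorphic_on ball 0 1"
    using Moebius_function_holomorphic z1 by simp
  have m1b: "Moebius_function 0 (-z1) ` ball 0 1 \<subseteq> ball 0 1"
    using Moebius_function_norm_lt_1 z1 by auto
  have m2: "Moebius_function 0 (\<psi> z1) holomorphic_on ball 0 1"
    using Moebius_function_holomorphic bd z1 by simp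
  have pb: "\<psi> ` ball 0 1 \<subseteq> ball 0 1" using bd by auto
  have hchi: "chi holomorphic_on ball 0 1"
    unfolding chi_def
    by (intro holomorphic_on_compose holomorphic_on_subset[OF m2 image_mono[OF m1b, THEN order_trans]]
        holomorphic_on_subset[OF hol m1b] m1) (use pb in auto)
  have "chi 0 = 0"
    by (simp add: chi_def Moebius_function_of_zero Moebius_function_eq_zero)
  moreover have "norm (chi z) < 1" if "norm z < 1" for z
    unfolding chi_def o_def
    by (intro Moebius_function_norm_lt_1 bd z1 Moebius_function_norm_lt_1 that) (use z1 in simp)
  ultimately have "norm (chi \<xi>) \<le> norm \<xi>" if "norm \<xi> < 1" for \<xi>
    using Schwarz_Lemma(1)[OF hchi] that by blast
  from this[of "Moebius_function 0 z1 z2"]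
  show ?thesis
    using Moebius_function_compose[of "-z1" z1 z2] Moebius_function_norm_lt_1[OF z1 z2] z1 z2
    by (simp add: chi_def)
qed

lemma moeb_est:
  fixes w v :: complex and k :: real
  assumes w: "norm w < 1" and v: "norm v < 1" and k: "k < 1"
    and le: "norm (Moebius_function 0 w v) \<le> k"
  shows "norm (1 + v) \<le> (1 + k) / (1 - k) * norm (1 + w)"
proof -
  have nz: "1 - cnj w * v \<noteq> 0"
  proof
    assume "1 - cnj w * v = 0"
    then have "norm (cnj w * v) = 1" by (metis eq_iff_diff_eq_0 norm_one)
    moreover have "norm (cnj w * v) < 1" using w v
      by (simp add: norm_mult) (metis abs_norm_cancel mult_le_one norm_ge_zero abs_less_iff less_le mult_strict_mono' mult_1 not_le)
    ultimately show False by simp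
  qed
  have "norm (v - w) \<le> k * norm (1 - cnj w * v)"
    using le nz by (simp add: Moebius_function_simple norm_divide divide_le_eq)
  moreover have "norm (v - w) \<ge> norm (1 + v) - norm (1 + w)"
    using norm_triangle_ineq[of "v - w" "1+w"] by (simp add: add.commute)
  moreover have "norm (1 - cnj w * v) \<le> norm (1 + v) + norm (1 + w)"
  proof -
    have "1 - cnj w * v = (1 + v) - cnj (1 + w) * v" by (simp add: algebra_simps)
    then have "norm (1 - cnj w * v) \<le> norm (1 + v) + norm (cnj (1 + w) * v)"
      by (metis norm_triangle_ineq4)
    also have "norm (cnj (1 + w) * v) \<le> norm (1 + w)"
      proof -
      have "norm (cnj (1 + w) * v) = norm (1 + w) * norm v" by (simp add: norm_mult del: complex_cnj_add)
      also have "\<dots> \<le> norm (1 + w)" using v by (simp add: mult_left_le)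
      finally show ?thesis .
    qed
    finally show ?thesis by simp
  qed
  moreover have "k \<ge> 0" using calculation(1) nz
    by (smt (verit, ccfv_SIG) le norm_ge_zero)
  ultimately have "norm (1 + v) - norm (1 + w) \<le> k * (norm (1 + v) + norm (1 + w))"
    by (smt (verit) mult_left_mono)
  then have "(1 - k) * norm (1 + v) \<le> (1 + k) * norm (1 + w)"
    by (simp add: algebra_simps)
  then show ?thesis using k by (simp add: field_simps)
qed

lemma core:
  fixes phi :: "complex \<Rightarrow> complex" and c0 b :: real
  assumes cb: "c0 < b"
   and hol: "phi holomorphic_on ({z. Im z \<noteq> 0} \<union> of_real ` {c0<..<b})"
   and bd: "\<And>z. z \<in> ({z. Im z \<noteq> 0} \<union> of_real ` {c0<..<b}) \<Longrightarrow> norm (phi z) < 1"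
   and lim: "((\<lambda>e. phi (of_real (b - e))) \<longlongrightarrow> -1) (at_right 0)"
  shows "((\<lambda>e::real. phi (of_real b + \<i> * of_real e)) \<longlongrightarrow> -1) (at_right 0)"
proof -
  define U where "U = {z. Im z \<noteq> 0} \<union> of_real ` {c0<..<b}"
  define z1 :: complex where "z1 = - (4/5) * \<i>"
  define z2 :: complex where "z2 = 4/5"
  define k where "k = norm (Moebius_function 0 z1 z2)"
  have nz1: "norm z1 < 1" by (simp add: z1_def norm_mult)
  have nz2: "norm z2 < 1" by (simp add: z2_def)
  have k1: "k < 1" unfolding k_def by (rule Moebius_function_norm_lt_1[OF nz1 nz2])
  define C where "C = (1 + k) / (1 - k)"
  have key: "norm (phi (of_real b + \<i> * of_real e) + 1) \<le> C * norm (phi (of_real (b - e)) + 1)"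
    if e: "0 < e" "e < (b - c0) / 2" for e
  proof -
    define A where "A = (\<lambda>\<zeta>. of_real b + of_real e * ((-1 + \<i>) + (5/4) * \<zeta>))"
    have AU: "A ` ball 0 1 \<subseteq> U"
    proof
      fix w assume "w \<in> A ` ball 0 1"
      then obtain \<zeta> where \<zeta>: "norm \<zeta> < 1" and w: "w = A \<zeta>" by auto
      show "w \<in> U"
      proof (cases "Im w = 0")
        case True
        then have imz: "Im \<zeta> = -4/5" using e by (simp add: w A_def)
        have "norm \<zeta> ^ 2 < 1" using \<zeta> by (simp add: power2_eq_square) (metis less_1_mult norm_ge_zero mult_1 mult_le_one le_less not_le mult_strict_mono' zero_less_one)
        then have s: "Re \<zeta> ^ 2 + Im \<zeta> ^ 2 < 1" by (simp add: cmod_power2)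
        have "\<bar>Re \<zeta>\<bar> < 3/5"
        proof (rule ccontr)
          assume "\<not> \<bar>Re \<zeta>\<bar> < 3/5"
          then have "(3/5)^2 \<le> \<bar>Re \<zeta>\<bar>^2" by (intro power_mono) auto
          then show False using s imz by (simp add: power2_eq_square)
        qed
        moreover have "Re w = b + e * (-1 + 5/4 * Re \<zeta>)" by (simp add: w A_def)
        moreover have "e * (-1 + 5/4 * Re \<zeta>) < 0"
          using e \<open>\<bar>Re \<zeta>\<bar> < 3/5\<close> by (intro mult_pos_neg) auto
        moreover have "e * (-7/4) < e * (-1 + 5/4 * Re \<zeta>)"
          using e \<open>\<bar>Re \<zeta>\<bar> < 3/5\<close> by (intro mult_strict_left_mono) auto
        ultimately have "Re w \<in> {c0<..<b}" using e by auto
        then show ?thesis using True unfolding U_def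
          by (metis UnCI complex_is_Real_iff image_eqI of_real_Re)
      next
        case False then show ?thesis by (simp add: U_def)
      qed
    qed
    define psi where "psi = phi \<circ> A"
    have hpsi: "psi holomorphic_on ball 0 1" unfolding psi_def
      by (rule holomorphic_on_compose[OF _ holomorphic_on_subset[OF hol AU[unfolded U_def]]])
         (simp add: A_def holomorphic_intros)
    have bpsi: "norm (psi z) < 1" if "norm z < 1" for z
    proof -
      have "A z \<in> U" using AU that by auto
      then show ?thesis using bd unfolding psi_def U_def by simp
    qed
    have p1: "psi z1 = phi (of_real (b - e))"
    proof -
      have "A z1 = of_real (b - e)" by (simp add: A_def z1_def complex_eq_iff)
      then show ?thesis by (simp add: psi_def)
    qed
    have p2: "psi z2 = phi (of_real b + \<i> * of_real e)"
    proof -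
      have "A z2 = of_real b + \<i> * of_real e" by (simp add: A_def z2_def complex_eq_iff)
      then show ?thesis by (simp add: psi_def)
    qed
    have "norm (Moebius_function 0 (psi z1) (psi z2)) \<le> k"
      unfolding k_def by (rule pick[OF hpsi bpsi nz1 nz2])
    from moeb_est[OF bpsi[OF nz1] bpsi[OF nz2] k1 this]
    show ?thesis unfolding p1 p2 C_def by (simp add: add.commute)
  qed
  have ev: "eventually (\<lambda>e. norm (phi (of_real b + \<i> * of_real e) - (-1)) \<le> C * norm (phi (of_real (b - e)) - (-1))) (at_right (0::real))"
  proof -
    show ?thesis unfolding eventually_at_right_field
      using cb key by (intro exI[of _ "(b - c0)/2"]) simp
  qed
  have "((\<lambda>e. C * norm (phi (of_real (b - e)) - (-1))) \<longlongrightarrow> 0) (at_right 0)"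
    by (rule tendsto_mult_right_zero[OF tendsto_norm_zero[OF LIM_zero[OF lim]]])
  then have "((\<lambda>e. phi (of_real b + \<i> * of_real e) - (-1)) \<longlongrightarrow> 0) (at_right 0)"
    using Lim_null_comparison[OF ev] by simp
  then show ?thesis using LIM_zero_cancel by fastforce
qed

lemma Re_csqrt_pos:
  assumes "w \<notin> \<real>\<^sub>\<le>\<^sub>0"
  shows "Re (csqrt w) > 0"
proof (rule ccontr)
  assume "\<not> Re (csqrt w) > 0"
  then have r0: "Re (csqrt w) = 0" using Re_csqrt[of w] by simp
  define y where "y = Im (csqrt w)"
  have "w = (csqrt w)^2" by simp
  also have "csqrt w = \<i> * of_real y" using r0 by (simp add: complex_eq_iff y_def del: csqrt.simps)
  finally have "w = of_real (- (y^2))" by (simp add: power_mult_distrib)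
  then have "w \<in> \<real>\<^sub>\<le>\<^sub>0" by (simp only: nonpos_Reals_of_real_iff) simp
  with assms show False by simp
qed

lemma cayley_lt1:
  assumes "Re k > 0"
  shows "norm ((k - 1) / (k + 1)) < 1"
proof -
  have nz: "k + 1 \<noteq> 0" using assms by (auto simp: complex_eq_iff)
  have "norm (k - 1) ^ 2 = (Re k - 1)^2 + (Im k)^2" by (simp add: cmod_power2)
  moreover have "norm (k + 1) ^ 2 = (Re k + 1)^2 + (Im k)^2" by (simp add: cmod_power2)
  ultimately have "norm (k - 1) ^ 2 < norm (k + 1) ^ 2"
    using assms by (simp add: power2_eq_square algebra_simps)
  then have "norm (k - 1) < norm (k + 1)"
    by (simp add: power_less_imp_less_base)
  then show ?thesis using nz by (simp add: norm_divide divide_less_eq)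
qed

lemma finite_case:
  fixes F :: "complex \<Rightarrow> complex" and c0 b L :: real
  assumes cb: "c0 < b"
   and hol: "F holomorphic_on ({z. Im z \<noteq> 0} \<union> of_real ` {c0<..<b})"
   and up: "\<And>z. Im z > 0 \<Longrightarrow> Im (F z) > 0"
   and lo: "\<And>z. Im z < 0 \<Longrightarrow> Im (F z) < 0"
   and re: "\<And>x. x \<in> {c0<..<b} \<Longrightarrow> Im (F (of_real x)) = 0 \<and> Re (F (of_real x)) < L"
   and lim: "((\<lambda>e. F (of_real (b - e))) \<longlongrightarrow> of_real L) (at_right 0)"
  shows "((\<lambda>e::real. F (of_real b + \<i> * of_real e)) \<longlongrightarrow> of_real L) (at_right 0)"
proof -
  define U where "U = {z. Im z \<noteq> 0} \<union> of_real ` {c0<..<b}"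
  define K where "K z = csqrt (of_real L - F z)" for z
  have notin: "of_real L - F z \<notin> \<real>\<^sub>\<le>\<^sub>0" if zU: "z \<in> U" for z
  proof (cases "Im z = 0")
    case True
    then obtain x where x: "x \<in> {c0<..<b}" "z = of_real x" using zU unfolding U_def by auto
    then show ?thesis using re[OF x(1)] by (simp add: complex_nonpos_Reals_iff)
  next
    case False
    then have "Im (F z) \<noteq> 0" using up lo by (metis linorder_neqE_linordered_idom less_irrefl)
    then show ?thesis by (simp add: complex_nonpos_Reals_iff)
  qed
  have holK: "K holomorphic_on U"
    unfolding K_def
    by (rule holomorphic_on_csqrt'[OF holomorphic_on_diff[OF holomorphic_on_const hol[folded U_def]] notin])
  have reK: "Re (K z) > 0" if "z \<in> U" for z
    unfolding K_def using Re_csqrt_pos[OF notin[OF that]] .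
  define phi where "phi z = (K z - 1) / (K z + 1)" for z
  have holphi: "phi holomorphic_on U"
  proof -
    have "K z + 1 \<noteq> 0" if "z \<in> U" for z using reK[OF that] by (auto simp: complex_eq_iff)
    then show ?thesis unfolding phi_def using holK by (intro holomorphic_intros) auto
  qed
  have bdphi: "norm (phi z) < 1" if "z \<in> U" for z
    unfolding phi_def using cayley_lt1[OF reK[OF that]] .
  have limK: "((\<lambda>e. K (of_real (b - e))) \<longlongrightarrow> 0) (at_right 0)"
  proof -
    have "((\<lambda>e. of_real L - F (of_real (b - e))) \<longlongrightarrow> 0) (at_right 0)"
    proof -
      have "((\<lambda>e. of_real L - F (of_real (b - e))) \<longlongrightarrow> of_real L - of_real L) (at_right 0)"
        by (intro tendsto_diff tendsto_const lim)
      then show ?thesis by simp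
    qed
    then have "((\<lambda>e. sqrt (norm (of_real L - F (of_real (b - e))))) \<longlongrightarrow> sqrt 0) (at_right 0)"
      by (intro tendsto_real_sqrt tendsto_norm_zero)
    then have "((\<lambda>e. norm (K (of_real (b - e)))) \<longlongrightarrow> 0) (at_right 0)"
      by (simp add: K_def)
    then show ?thesis by (simp add: tendsto_norm_zero_iff)
  qed
  have limphi: "((\<lambda>e. phi (of_real (b - e))) \<longlongrightarrow> -1) (at_right 0)"
  proof -
    have "((\<lambda>e. (K (of_real (b - e)) - 1) / (K (of_real (b - e)) + 1)) \<longlongrightarrow> (0 - 1) / (0 + 1)) (at_right 0)"
      by (intro tendsto_divide tendsto_diff tendsto_add limK tendsto_const) simp
    then show ?thesis by (simp add: phi_def)
  qed
  have lim2: "((\<lambda>e::real. phi (of_real b + \<i> * of_real e)) \<longlongrightarrow> -1) (at_right 0)"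
    using core[OF cb holphi[unfolded U_def] bdphi[unfolded U_def] limphi] .
  have Kinv: "K z = (1 + phi z) / (1 - phi z)" if "z \<in> U" for z
  proof -
    have nz: "K z + 1 \<noteq> 0" using reK[OF that] by (auto simp: complex_eq_iff)
    have e1: "1 + phi z = 2 * K z / (K z + 1)" using nz by (simp add: phi_def field_simps)
    have e2: "1 - phi z = 2 / (K z + 1)" using nz by (simp add: phi_def field_simps)
    show ?thesis using nz by (simp add: e1 e2)
  qed
  have inU: "of_real b + \<i> * of_real e \<in> U" if "e > 0" for e :: real
    using that by (simp add: U_def)
  have "((\<lambda>e::real. (1 + phi (of_real b + \<i> * of_real e)) / (1 - phi (of_real b + \<i> * of_real e))) \<longlongrightarrow> (1 + -1) / (1 - -1)) (at_right 0)"
    by (intro tendsto_divide tendsto_diff tendsto_add lim2 tendsto_const) simp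
  then have "((\<lambda>e::real. (1 + phi (of_real b + \<i> * of_real e)) / (1 - phi (of_real b + \<i> * of_real e))) \<longlongrightarrow> 0) (at_right 0)"
    by simp
  moreover have ev2: "eventually (\<lambda>e::real. (1 + phi (of_real b + \<i> * of_real e)) / (1 - phi (of_real b + \<i> * of_real e)) = K (of_real b + \<i> * of_real e)) (at_right 0)"
    using eventually_at_right_less[of "0::real"] by eventually_elim (simp add: Kinv[OF inU])
  ultimately have "((\<lambda>e::real. K (of_real b + \<i> * of_real e)) \<longlongrightarrow> 0) (at_right 0)"
    by (rule Lim_transform_eventually)
  then have "((\<lambda>e::real. of_real L - (K (of_real b + \<i> * of_real e))^2) \<longlongrightarrow> of_real L - 0^2) (at_right 0)"
    by (intro tendsto_diff tendsto_const tendsto_power)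
  moreover have "of_real L - (K z)^2 = F z" for z by (simp add: K_def)
  ultimately show ?thesis by simp
qed

lemma U_eq: "{z. Im z \<noteq> 0} \<union> complex_of_real ` {c0<..<b} = {z. Im z \<noteq> 0} \<union> {z. c0 < Re z \<and> Re z < b}"
proof (intro equalityI subsetI)
  fix z assume "z \<in> {z. Im z \<noteq> 0} \<union> {z. c0 < Re z \<and> Re z < b}"
  then show "z \<in> {z. Im z \<noteq> 0} \<union> complex_of_real ` {c0<..<b}"
    by (cases "Im z = 0") (auto intro!: image_eqI[of _ _ "Re z"] simp: complex_eq_iff)
qed auto

lemma open_U: "open ({z. Im z \<noteq> 0} \<union> complex_of_real ` {c0<..<b})"
  unfolding U_eq
  by (intro open_Un open_Collect_neq open_Collect_conj open_Collect_less continuous_intros)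

lemma strict_incr:
  fixes f :: "complex \<Rightarrow> complex" and c0 b x1 x2 :: real
  assumes hol: "f holomorphic_on ({z. Im z \<noteq> 0} \<union> of_real ` {c0<..<b})"
   and up: "\<And>z. Im z > 0 \<Longrightarrow> Im (f z) > 0"
   and re: "\<And>x. x \<in> {c0<..<b} \<Longrightarrow> Im (f (of_real x)) = 0"
   and x: "c0 < x1" "x1 < x2" "x2 < b"
  shows "Re (f (of_real x1)) < Re (f (of_real x2))"
proof -
  define U where "U = {z. Im z \<noteq> 0} \<union> complex_of_real ` {c0<..<b}"
  have oU: "open U" unfolding U_def by (rule open_U)
  define g where "g x = Re (f (of_real x))" for x
  have gD: "\<exists>D. (g has_real_derivative D) (at x) \<and> D \<ge> 0" if xI: "x \<in> {c0<..<b}" for x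
  proof -
    have xU: "of_real x \<in> U" using xI by (simp add: U_def)
    define D where "D = deriv f (of_real x)"
    have fD: "(f has_field_derivative D) (at (of_real x))"
      unfolding D_def using holomorphic_derivI[OF hol[folded U_def] oU xU] .
    have "(g has_real_derivative Re D) (at x)"
      unfolding g_def using has_field_derivative_Re[OF has_vector_derivative_real_field[OF fD, of UNIV]] by simp
    moreover have "Re D \<ge> 0"
    proof (rule ccontr)
      assume neg: "\<not> Re D \<ge> 0"
      have fD0: "(f has_field_derivative D) (at (of_real x + \<i> * 0))" using fD by simp
      have lin: "((\<lambda>w. of_real x + \<i> * w) has_field_derivative \<i>) (at 0)"
        by (auto intro!: derivative_eq_intros)
      have "((\<lambda>w. f (of_real x + \<i> * w)) has_field_derivative D * \<i>) (at (of_real 0))"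
        using DERIV_chain2[OF fD0 lin] by simp
      from has_field_derivative_Im[OF has_vector_derivative_real_field[OF this, of UNIV]]
      have "((\<lambda>t. Im (f (of_real x + \<i> * of_real t))) has_real_derivative Re D) (at 0)"
        by simp
      from DERIV_neg_dec_right[OF this] neg obtain d where d: "d > 0"
        "\<And>h. h > 0 \<Longrightarrow> h < d \<Longrightarrow> Im (f (of_real x + \<i> * of_real 0)) > Im (f (of_real x + \<i> * of_real (0 + h)))"
        by force
      have "Im (f (of_real x + \<i> * of_real 0)) = 0" using re[OF xI] by simp
      moreover have "Im (f (of_real x + \<i> * of_real (0 + d/2))) > 0" using d(1) by (intro up) simp
      ultimately show False using d(2)[of "d/2"] d(1) by simp
    qed
    ultimately show ?thesis by blast
  qed
  have mono: "g y1 \<le> g y2" if "c0 < y1" "y1 \<le> y2" "y2 < b" for y1 y2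
    using that by (intro DERIV_nonneg_imp_nondecreasing[OF that(2)]) (use gD in force)
  show ?thesis
  proof (rule ccontr)
    assume "\<not> ?thesis"
    then have geq: "g x2 \<le> g x1" by (simp add: g_def)
    have const: "f (of_real t) - of_real (g x1) = 0" if "t \<in> {x1..x2}" for t
    proof -
      have "g t = g x1" using mono[of x1 t] mono[of t x2] that x geq by auto
      moreover have "Im (f (of_real t)) = 0" using re that x by auto
      ultimately show ?thesis by (simp add: g_def complex_eq_iff)
    qed
    define xm where "xm = (x1 + x2) / 2"
    define \<rho> where "\<rho> = min (xm - c0) (b - xm)"
    have \<rho>: "\<rho> > 0" "\<rho> > (x2 - x1) / 2" using x unfolding \<rho>_def xm_def by (auto simp: min_def field_simps)
    define S where "S = ball (complex_of_real xm) \<rho>"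
    have SU: "S \<subseteq> U"
    proof
      fix z assume z: "z \<in> S"
      show "z \<in> U"
      proof (cases "Im z = 0")
        case True
        have "\<bar>Re z - xm\<bar> \<le> dist z (of_real xm)"
          using abs_Re_le_cmod[of "z - of_real xm"] by (simp add: dist_norm)
        then have "\<bar>Re z - xm\<bar> < \<rho>" using z by (simp add: S_def dist_commute)
        then have "Re z \<in> {c0<..<b}" by (auto simp: \<rho>_def)
        then show ?thesis using True by (auto simp: U_def intro!: image_eqI[of _ _ "Re z"] simp: complex_eq_iff)
      qed (simp add: U_def)
    qed
    have "(\<lambda>z. f z - of_real (g x1)) (of_real xm + \<i> * of_real (\<rho>/2)) = 0"
    proof (rule analytic_continuation[of "\<lambda>z. f z - of_real (g x1)" S "of_real ` {x1..x2}" "of_real xm"])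
      show "(\<lambda>z. f z - of_real (g x1)) holomorphic_on S"
        using holomorphic_on_subset[OF hol[folded U_def] SU] by (intro holomorphic_intros)
      show "open S" "connected S" by (auto simp: S_def)
      show "of_real ` {x1..x2} \<subseteq> S"
      proof
        fix z assume "z \<in> complex_of_real ` {x1..x2}"
        then obtain t where t: "t \<in> {x1..x2}" "z = of_real t" by auto
        have "dist (complex_of_real xm) z = \<bar>xm - t\<bar>"
          using t by (simp add: dist_norm flip: of_real_diff)
        also have "\<dots> < \<rho>" using t \<rho> by (auto simp: xm_def abs_if field_simps)
        finally show "z \<in> S" by (simp add: S_def)
      qed
      show "of_real xm \<in> S" using \<rho> by (simp add: S_def)
      show "complex_of_real xm islimpt complex_of_real ` {x1..x2}"
        unfolding islimpt_approachable
      proof (intro allI impI)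
        fix e :: real assume e: "e > 0"
        define d where "d = min (e/2) ((x2 - x1)/4)"
        have d: "d > 0" "d < e" "d \<le> (x2 - x1)/4" using e x unfolding d_def by (auto simp: min_def)
        show "\<exists>x'\<in>complex_of_real ` {x1..x2}. x' \<noteq> complex_of_real xm \<and> dist x' (complex_of_real xm) < e"
        proof (intro bexI[of _ "of_real (xm + d)"] conjI)
          have "xm + d \<in> {x1..x2}" using d x by (auto simp: xm_def field_simps)
          then show "complex_of_real (xm + d) \<in> complex_of_real ` {x1..x2}" by blast
          show "complex_of_real (xm + d) \<noteq> complex_of_real xm" using d by simp
          have "dist (complex_of_real (xm + d)) (complex_of_real xm) = d"
            using d by (simp only: dist_of_real) (simp add: dist_real_def)
          then show "dist (complex_of_real (xm + d)) (complex_of_real xm) < e" using d by simp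
        qed
      qed
      show "\<And>z. z \<in> complex_of_real ` {x1..x2} \<Longrightarrow> f z - complex_of_real (g x1) = 0"
        using const by auto
      have "dist (complex_of_real xm) (of_real xm + \<i> * of_real (\<rho>/2)) = \<rho>/2"
        using \<rho> by (simp add: dist_norm norm_mult)
      then show "of_real xm + \<i> * of_real (\<rho>/2) \<in> S" using \<rho> by (simp add: S_def)
    qed
    then have "Im (f (of_real xm + \<i> * of_real (\<rho>/2))) = 0" by (simp add: complex_eq_iff)
    moreover have "Im (f (of_real xm + \<i> * of_real (\<rho>/2))) > 0" using \<rho> by (intro up) simp
    ultimately show False by simp
  qed
qed

lemma Im_neg_inv: "Im (-1 / w) = Im w / (norm w)^2"
  by (simp add: Im_divide')

theorem lemma3p5:
  fixes f :: "complex \<Rightarrow> complex" and a b :: real and P :: "complex set"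
  assumes "a < b"
    and "herglotz f"
    and "finite P"
    and "P \<subseteq> complex_of_real ` {a<..<b}"
    and "f holomorphic_on (({z. Im z \<noteq> 0} \<union> complex_of_real ` {a<..<b}) - P)"
    and "\<forall>p\<in>P. is_pole f p"
    and "\<forall>z \<in> ({z. Im z \<noteq> 0} \<union> complex_of_real ` {a<..<b}) - P. cnj (f z) = f (cnj z)"
  shows "(\<exists>L::real. ((\<lambda>e::real. f (complex_of_real (b - e))) \<longlongrightarrow> complex_of_real L) (at_right 0)
              \<and> ((\<lambda>e::real. f (complex_of_real b + \<i> * complex_of_real e)) \<longlongrightarrow> complex_of_real L) (at_right 0))
       \<or> (filterlim (\<lambda>e::real. f (complex_of_real (b - e))) at_infinity (at_right 0)
              \<and> filterlim (\<lambda>e::real. f (complex_of_real b + \<i> * complex_of_real e)) at_infinity (at_right 0))"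
proof -
  note ab = assms(1) and herg = assms(2) and finP = assms(3) and Psub = assms(4)
    and holD = assms(5) and sym = assms(7)
  define D where "D = ({z. Im z \<noteq> 0} \<union> complex_of_real ` {a<..<b}) - P"
  define c0 where "c0 = Max (insert a (Re ` P))"
  have c0a: "a \<le> c0" unfolding c0_def using finP by simp
  have c0b: "c0 < b"
  proof -
    have "\<forall>x\<in>insert a (Re ` P). x < b" using ab Psub by auto
    then show ?thesis unfolding c0_def using finP by (subst Max_less_iff) auto
  qed
  have noP: "of_real x \<notin> P" if "x \<in> {c0<..<b}" for x
  proof
    assume "complex_of_real x \<in> P"
    then have "x \<le> c0" unfolding c0_def using finP
      by (metis Max_ge finite_imageI finite_insert image_eqI insertCI Re_complex_of_real)
    then show False using that by simp
  qed
  have PIm: "Im p = 0" if "p \<in> P" for p using Psub that by auto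
  define U where "U = {z. Im z \<noteq> 0} \<union> complex_of_real ` {c0<..<b}"
  have UD: "U \<subseteq> D"
  proof
    fix z assume z: "z \<in> U"
    show "z \<in> D"
    proof (cases "Im z = 0")
      case True
      then obtain x where x: "x \<in> {c0<..<b}" "z = of_real x" using z by (auto simp: U_def)
      then show ?thesis using noP[OF x(1)] c0a by (auto simp: D_def)
    next
      case False
      then show ?thesis using PIm by (auto simp: D_def)
    qed
  qed
  have holU: "f holomorphic_on U" using holomorphic_on_subset[OF holD[folded D_def] UD] .
  have up: "Im (f z) > 0" if "Im z > 0" for z using herg that by (simp add: herglotz_def)
  have lo: "Im (f z) < 0" if "Im z < 0" for z
  proof -
    have "cnj z \<in> D" using that PIm[of "cnj z"] by (auto simp: D_def)
    then have "cnj (f (cnj z)) = f z" using sym by (simp add: D_def)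
    moreover have "Im (f (cnj z)) > 0" using that by (intro up) simp
    ultimately show ?thesis by (metis cnj.sel(2) neg_less_0_iff_less)
  qed
  have re: "Im (f (of_real x)) = 0" if "x \<in> {c0<..<b}" for x
  proof -
    have "of_real x \<in> D" using UD that by (auto simp: U_def)
    then have "cnj (f (of_real x)) = f (of_real x)" using sym by (simp add: D_def)
    then have "- Im (f (of_real x)) = Im (f (of_real x))" by (metis cnj.sel(2))
    then show ?thesis by simp
  qed
  define g where "g x = Re (f (of_real x))" for x
  have fx: "f (of_real x) = of_real (g x)" if "x \<in> {c0<..<b}" for x
    using re[OF that] by (simp add: g_def complex_eq_iff)
  have inc: "g x1 < g x2" if "c0 < x1" "x1 < x2" "x2 < b" for x1 x2
    unfolding g_def by (rule strict_incr[OF holU[unfolded U_def] up re that])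
  have evI: "eventually (\<lambda>e. b - e \<in> {x<..<b}) (at_right (0::real))" if "x < b" for x
    unfolding eventually_at_right_field using that by (intro exI[of _ "b - x"]) auto
  have ev0: "eventually (\<lambda>e. b - e \<in> {c0<..<b}) (at_right (0::real))" using evI[OF c0b] .
  have limf_of_g: "((\<lambda>e. f (of_real (b - e))) \<longlongrightarrow> of_real L) (at_right 0)"
    if "((\<lambda>e. g (b - e)) \<longlongrightarrow> L) (at_right 0)" for L
  proof -
    have "((\<lambda>e. complex_of_real (g (b - e))) \<longlongrightarrow> of_real L) (at_right 0)"
      using tendsto_of_real[OF that] .
    moreover have "eventually (\<lambda>e. complex_of_real (g (b - e)) = f (of_real (b - e))) (at_right (0::real))"
      using ev0 by eventually_elim (rule fx[symmetric])
    ultimately show ?thesis by (rule Lim_transform_eventually)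
  qed
  show ?thesis
  proof (cases "bdd_above (g ` {c0<..<b})")
    case True
    define L where "L = Sup (g ` {c0<..<b})"
    have ne: "g ` {c0<..<b} \<noteq> {}" using c0b by auto
    have gleL: "g x \<le> L" if "x \<in> {c0<..<b}" for x
      unfolding L_def using True that by (intro cSup_upper) auto
    have gltL: "g x < L" if "x \<in> {c0<..<b}" for x
    proof -
      have "g x < g ((x + b) / 2)" using that by (intro inc) auto
      also have "\<dots> \<le> L" using that by (intro gleL) auto
      finally show ?thesis .
    qed
    have limg: "((\<lambda>e. g (b - e)) \<longlongrightarrow> L) (at_right 0)"
    proof (rule order_tendstoI)
      fix y assume "y < L"
      then obtain x where x: "x \<in> {c0<..<b}" "y < g x"
        using less_cSup_iff[OF ne True] unfolding L_def by auto
      show "eventually (\<lambda>e. y < g (b - e)) (at_right 0)"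
        using evI[of x] x
      proof -
        have "eventually (\<lambda>e. b - e \<in> {x<..<b}) (at_right (0::real))" using evI x by auto
        then show ?thesis
        proof eventually_elim
          case (elim e)
          then have "g x < g (b - e)" using x by (intro inc) auto
          then show ?case using x by simp
        qed
      qed
    next
      fix y assume "y > L"
      show "eventually (\<lambda>e. g (b - e) < y) (at_right 0)"
        using ev0 by eventually_elim (use gltL \<open>y > L\<close> in force)
    qed
    have limf: "((\<lambda>e. f (of_real (b - e))) \<longlongrightarrow> of_real L) (at_right 0)"
      by (rule limf_of_g[OF limg])
    have re': "Im (f (of_real x)) = 0 \<and> Re (f (of_real x)) < L" if "x \<in> {c0<..<b}" for x
      using re[OF that] gltL[OF that] by (simp add: g_def)
    have "((\<lambda>e::real. f (of_real b + \<i> * of_real e)) \<longlongrightarrow> of_real L) (at_right 0)"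
      by (rule finite_case[OF c0b holU[unfolded U_def] up lo re' limf])
    then show ?thesis using limf by blast
  next
    case False
    have unb: "\<exists>x\<in>{c0<..<b}. g x > M" for M
      using False unfolding bdd_above_def by (auto simp: not_le)
    have gtop: "filterlim (\<lambda>e. g (b - e)) at_top (at_right 0)"
      unfolding filterlim_at_top
    proof
      fix Z
      obtain x where x: "x \<in> {c0<..<b}" "g x > Z" using unb by blast
      have "eventually (\<lambda>e. b - e \<in> {x<..<b}) (at_right (0::real))" using evI x by auto
      then show "eventually (\<lambda>e. Z \<le> g (b - e)) (at_right 0)"
      proof eventually_elim
        case (elim e)
        then have "g x < g (b - e)" using x by (intro inc) auto
        then show ?case using x by simp
      qed
    qed
    have f1: "filterlim (\<lambda>e. f (of_real (b - e))) at_infinity (at_right 0)"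
      unfolding filterlim_at_infinity_conv_norm_at_top
    proof (rule filterlim_at_top_mono[OF gtop])
      show "eventually (\<lambda>e. g (b - e) \<le> norm (f (of_real (b - e)))) (at_right 0)"
        using ev0
      proof eventually_elim
        case (elim e)
        show ?case using fx[OF elim] by simp
      qed
    qed
    define x0 where "x0 = (c0 + b) / 2"
    have x0: "c0 < x0" "x0 < b" using c0b by (auto simp: x0_def)
    define m where "m = g x0"
    define U0 where "U0 = {z. Im z \<noteq> 0} \<union> complex_of_real ` {x0<..<b}"
    have U0U: "U0 \<subseteq> U" using x0 by (auto simp: U0_def U_def)
    have gm: "g x > m" if "x \<in> {x0<..<b}" for x
      unfolding m_def using that x0 by (intro inc) auto
    have nz: "f z - of_real m \<noteq> 0" if zU0: "z \<in> U0" for z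
    proof (cases "Im z = 0")
      case True
      then obtain x where x: "x \<in> {x0<..<b}" "z = of_real x" using zU0 unfolding U0_def by auto
      then have "f z = of_real (g x)" using fx x0 by auto
      then show ?thesis using gm[OF x(1)] by simp
    next
      case False
      then have "Im (f z) \<noteq> 0" using up lo by (metis linorder_neqE_linordered_idom less_irrefl)
      then show ?thesis by (auto simp: complex_eq_iff)
    qed
    define h where "h z = -1 / (f z - of_real m)" for z
    have holh: "h holomorphic_on U0"
      unfolding h_def using holomorphic_on_subset[OF holU U0U] nz by (intro holomorphic_intros) auto
    have uph: "Im (h z) > 0" if "Im z > 0" for z
    proof -
      have "Im (f z - of_real m) > 0" using up[OF that] by simp
      then show ?thesis unfolding h_def Im_neg_inv
        by (intro divide_pos_pos) (auto simp: complex_eq_iff)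
    qed
    have loh: "Im (h z) < 0" if "Im z < 0" for z
    proof -
      have "Im (f z - of_real m) < 0" using lo[OF that] by simp
      then show ?thesis unfolding h_def Im_neg_inv
        by (intro divide_neg_pos) (auto simp: complex_eq_iff)
    qed
    have hx: "h (of_real x) = of_real (- inverse (g x - m))" if "x \<in> {x0<..<b}" for x
      using that x0 fx[of x] by (simp add: h_def divide_inverse)
    have reh: "Im (h (of_real x)) = 0 \<and> Re (h (of_real x)) < 0" if "x \<in> {x0<..<b}" for x
      using hx[OF that] gm[OF that] by simp
    have limh: "((\<lambda>e. h (of_real (b - e))) \<longlongrightarrow> of_real 0) (at_right 0)"
    proof -
      have "filterlim (\<lambda>e. - m + g (b - e)) at_top (at_right 0)"
        by (rule filterlim_tendsto_add_at_top[OF tendsto_const gtop])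
      then have "((\<lambda>e. inverse (- m + g (b - e))) \<longlongrightarrow> 0) (at_right 0)"
        by (rule tendsto_inverse_0_at_top)
      then have "((\<lambda>e. complex_of_real (- inverse (g (b - e) - m))) \<longlongrightarrow> of_real (- 0)) (at_right 0)"
        by (intro tendsto_of_real tendsto_minus) simp
      moreover have "eventually (\<lambda>e. complex_of_real (- inverse (g (b - e) - m)) = h (of_real (b - e))) (at_right (0::real))"
        using evI[OF x0(2)] by eventually_elim (rule hx[symmetric])
      ultimately show ?thesis by (simp add: Lim_transform_eventually)
    qed
    have limv: "((\<lambda>e::real. h (of_real b + \<i> * of_real e)) \<longlongrightarrow> of_real 0) (at_right 0)"
      by (rule finite_case[OF x0(2) holh[unfolded U0_def] uph loh reh limh])
    have inU0: "of_real b + \<i> * of_real e \<in> U0" if "e > 0" for e :: real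
      using that by (simp add: U0_def)
    have "filterlim (\<lambda>e::real. inverse (norm (h (of_real b + \<i> * of_real e)))) at_top (at_right 0)"
    proof (rule filterlim_inverse_at_top)
      show "((\<lambda>e::real. norm (h (of_real b + \<i> * of_real e))) \<longlongrightarrow> 0) (at_right 0)"
        using tendsto_norm_zero[OF limv[simplified]] .
      show "eventually (\<lambda>e::real. 0 < norm (h (of_real b + \<i> * of_real e))) (at_right 0)"
        using eventually_at_right_less[of "0::real"]
        by eventually_elim (use nz[OF inU0] in \<open>simp add: h_def\<close>)
    qed
    then have "filterlim (\<lambda>e::real. - \<bar>m\<bar> + inverse (norm (h (of_real b + \<i> * of_real e)))) at_top (at_right 0)"
      by (rule filterlim_tendsto_add_at_top[OF tendsto_const])
    then have f2: "filterlim (\<lambda>e::real. f (of_real b + \<i> * of_real e)) at_infinity (at_right 0)"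
      unfolding filterlim_at_infinity_conv_norm_at_top
    proof (rule filterlim_at_top_mono)
      show "eventually (\<lambda>e::real. - \<bar>m\<bar> + inverse (norm (h (of_real b + \<i> * of_real e))) \<le> norm (f (of_real b + \<i> * of_real e))) (at_right 0)"
        using eventually_at_right_less[of "0::real"]
      proof eventually_elim
        case (elim e)
        define w where "w = f (of_real b + \<i> * of_real e)"
        have wnz: "w - of_real m \<noteq> 0" using nz[OF inU0[OF elim]] by (simp add: w_def)
        have "inverse (norm (h (of_real b + \<i> * of_real e))) = norm (w - of_real m)"
          using wnz by (simp add: h_def w_def[symmetric] norm_divide)
        also have "\<dots> \<le> norm w + \<bar>m\<bar>" using norm_triangle_ineq4[of w "of_real m"] by simp
        finally show ?case by (simp add: w_def)
      qed
    qed
    show ?thesis using f1 f2 by blast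
  qed
qed

end
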